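(* Let $A\subseteq\omega$ be a c.e. set such that $\overline{\rho}(A)$ is a $\Delta^0_2$ real. Then $A$ has a computable subset $B$ such that $\overline{\rho}(B)=\overline{\rho}(A)$, and hence $d(A,B)=0$.
   Context: For $S\subseteq\omega$ and $n>0$, $\rho_n(S)=|S\cap[0,n)|/n$; $\overline{\rho}(S)=\limsup_n\rho_n(S)$ and $\underline{\rho}(S)=\liminf_n\rho_n(S)$. For $A,B\subseteq\omega$, $d(A,B)=\underline{\rho}(A\triangle B)$. A real is $\Delta^0_2$ if it is the limit of a computable sequence of rationals. *)

theory Defs
  imports Complex_Main "HOL-Library.Extended_Real"
begin

datatype recf =
    Zero
  | Succ
  | Proj nat
  | Comp recf "recf list"
  | PrRec recf recf
  | Mu recf

text \<open>eval r xs y: the partial recursive function coded by r, applied to the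
argument list xs, converges with value y.  For PrRec and Mu the recursion /
search variable is the first argument.\<close>

inductive eval :: "recf \<Rightarrow> nat list \<Rightarrow> nat \<Rightarrow> bool" where
  eval_Zero: "eval Zero xs 0"
| eval_Succ: "eval Succ (x # xs) (Suc x)"
| eval_Proj: "i < length xs \<Longrightarrow> eval (Proj i) xs (xs ! i)"
| eval_Comp: "list_all2 (\<lambda>g y. eval g xs y) gs ys \<Longrightarrow> eval f ys y \<Longrightarrow> eval (Comp f gs) xs y"
| eval_Pr0: "eval f xs y \<Longrightarrow> eval (PrRec f g) (0 # xs) y"
| eval_PrS: "eval (PrRec f g) (n # xs) z \<Longrightarrow> eval g (z # n # xs) y
             \<Longrightarrow> eval (PrRec f g) (Suc n # xs) y"
| eval_Mu: "eval f (y # xs) 0 \<Longrightarrow> (\<forall>k<y. \<exists>v. eval f (k # xs) v \<and> v > 0)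
             \<Longrightarrow> eval (Mu f) xs y"

definition computable_fun :: "(nat \<Rightarrow> nat) \<Rightarrow> bool" where
  "computable_fun f \<longleftrightarrow> (\<exists>r. \<forall>n. eval r [n] (f n))"

definition computable_set :: "nat set \<Rightarrow> bool" where
  "computable_set B \<longleftrightarrow> computable_fun (\<lambda>n. if n \<in> B then 1 else 0)"

definition ce_set :: "nat set \<Rightarrow> bool" where
  "ce_set A \<longleftrightarrow> (\<exists>r. A = {n. \<exists>y. eval r [n] y})"

definition delta02_real :: "real \<Rightarrow> bool" where
  "delta02_real x \<longleftrightarrow> (\<exists>a b c. computable_fun a \<and> computable_fun b \<and> computable_fun c \<and>
      (\<lambda>n. (real (a n) - real (b n)) / real (c n + 1)) \<longlonglongrightarrow> x)"

definition rho :: "nat \<Rightarrow> nat set \<Rightarrow> real" where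
  "rho n S = real (card (S \<inter> {..<n})) / real n"

definition upper_density :: "nat set \<Rightarrow> real" where
  "upper_density S = real_of_ereal (limsup (\<lambda>n. ereal (rho (Suc n) S)))"

definition lower_density :: "nat set \<Rightarrow> real" where
  "lower_density S = real_of_ereal (liminf (\<lambda>n. ereal (rho (Suc n) S)))"

definition dens_dist :: "nat set \<Rightarrow> nat set \<Rightarrow> real" where
  "dens_dist A B = lower_density ((A - B) \<union> (B - A))"

end

theory Submission
  imports Defs
begin


primrec prrec :: "(nat list \<Rightarrow> nat option) \<Rightarrow> (nat list \<Rightarrow> nat option) \<Rightarrow> nat \<Rightarrow> nat list \<Rightarrow> nat option" where
  "prrec F G 0 ys = F ys"
| "prrec F G (Suc m) ys = (case prrec F G m ys of None \<Rightarrow> None | Some z \<Rightarrow> G (z # m # ys))"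

definition msearch :: "(nat \<Rightarrow> nat option) \<Rightarrow> nat \<Rightarrow> nat option" where
  "msearch F s = (if \<exists>y<s. F y = Some 0 \<and> (\<forall>k<y. \<exists>v. F k = Some v \<and> v > 0)
      then Some (THE y. y<s \<and> F y = Some 0 \<and> (\<forall>k<y. \<exists>v. F k = Some v \<and> v > 0)) else None)"

fun beval :: "nat \<Rightarrow> recf \<Rightarrow> nat list \<Rightarrow> nat option" where
  "beval s Zero xs = Some 0"
| "beval s Succ xs = (case xs of [] \<Rightarrow> None | x # _ \<Rightarrow> Some (Suc x))"
| "beval s (Proj i) xs = (if i < length xs then Some (xs ! i) else None)"
| "beval s (Comp f gs) xs = (let vs = map (\<lambda>g. beval s g xs) gs in
      if None \<in> set vs then None else beval s f (map the vs))"
| "beval s (PrRec f g) xs = (case xs of [] \<Rightarrow> None | m # ys \<Rightarrow> prrec (beval s f) (beval s g) m ys)"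
| "beval s (Mu f) xs = msearch (\<lambda>y. beval s f (y # xs)) s"


lemma msearch_unique:
  fixes F :: "nat \<Rightarrow> nat option"
  assumes "F y = Some 0" "\<forall>k<y. \<exists>v. F k = Some v \<and> v > 0" "F y' = Some 0" "\<forall>k<y'. \<exists>v. F k = Some v \<and> v > 0"
  shows "y = y'"
proof (rule ccontr)
  assume "y \<noteq> y'"
  then have "y < y' \<or> y' < y" by (simp add: nat_neq_iff)
  then show False using assms by (metis less_numeral_extra(3) option.inject)
qed

lemma msearch_Some: "msearch F s = Some y \<longleftrightarrow> y < s \<and> F y = Some 0 \<and> (\<forall>k<y. \<exists>v. F k = Some v \<and> v > 0)"
proof -
  let ?P = "\<lambda>y. y<s \<and> F y = Some 0 \<and> (\<forall>k<y. \<exists>v. F k = Some v \<and> v > 0)"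
  have th: "?P y0 \<Longrightarrow> (THE y. ?P y) = y0" for y0
    apply (rule the_equality) using msearch_unique by blast+
  show ?thesis
  proof
    assume h: "msearch F s = Some y"
    then obtain y0 where y0: "?P y0" unfolding msearch_def by (auto split: if_splits)
    have "msearch F s = Some y0" unfolding msearch_def using y0 th[OF y0] by auto
    then show "?P y" using h y0 by simp
  next
    assume y0: "?P y"
    show "msearch F s = Some y" unfolding msearch_def using y0 th[OF y0] by auto
  qed
qed

lemma prrec_sound:
  assumes "\<And>ys y. F ys = Some y \<Longrightarrow> eval f ys y" "\<And>ys y. G ys = Some y \<Longrightarrow> eval g ys y"
  shows "prrec F G m ys = Some y \<Longrightarrow> eval (PrRec f g) (m # ys) y"
proof (induction m arbitrary: y)
  case 0 then show ?case using assms by (auto intro: eval_Pr0)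
next
  case (Suc m)
  then obtain z where "prrec F G m ys = Some z" "G (z # m # ys) = Some y"
    by (auto split: option.splits)
  then show ?case using Suc assms by (auto intro: eval_PrS)
qed

lemma beval_sound: "beval s r xs = Some y \<Longrightarrow> eval r xs y"
proof (induction s r xs arbitrary: y rule: beval.induct)
  case (1 s xs) then show ?case by (auto intro: eval_Zero)
next
  case (2 s xs) then show ?case by (auto intro: eval_Succ split: list.splits)
next
  case (3 s i xs) then show ?case by (auto intro: eval_Proj split: if_splits)
next
  case (4 s f gs xs)
  let ?vs = "map (\<lambda>g. beval s g xs) gs"
  have e: "beval s (Comp f gs) xs = (if None \<in> set ?vs then None else beval s f (map the ?vs))"
    by (simp only: beval.simps Let_def)
  have nn: "None \<notin> set ?vs" using e 4(3) by (metis option.distinct(1))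
  have fy: "beval s f (map the ?vs) = Some y" using e 4(3) nn by simp
  have "list_all2 (\<lambda>g y. eval g xs y) gs (map the ?vs)"
    unfolding list_all2_conv_all_nth
  proof (intro conjI allI impI)
    fix i assume i: "i < length gs"
    have "?vs ! i \<noteq> None" using nn i by (metis length_map nth_mem)
    then have "beval s (gs!i) xs = Some (map the ?vs ! i)"
      using i by simp
    moreover have "gs ! i \<in> set gs" using i by simp
    ultimately show "eval (gs!i) xs (map the ?vs ! i)" using 4(1) by blast
  qed simp
  moreover have "eval f (map the ?vs) y" using 4(2)[OF refl] nn fy by simp
  ultimately show ?case by (rule eval_Comp)
next
  case (5 s f g xs)
  then obtain m ys where xs: "xs = m # ys" by (cases xs) auto
  have "prrec (beval s f) (beval s g) m ys = Some y" using 5(3) xs by simp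
  then have "eval (PrRec f g) (m # ys) y"
    by (rule prrec_sound[rotated 2]) (use 5(1,2) xs in auto)
  then show ?case using xs by simp
next
  case (6 s f xs)
  from 6(2) have h: "y < s" "beval s f (y # xs) = Some 0" "\<forall>k<y. \<exists>v. beval s f (k # xs) = Some v \<and> v > 0"
    by (auto simp: msearch_Some)
  have "\<forall>k<y. \<exists>v. eval f (k # xs) v \<and> v > 0"
  proof (intro allI impI)
    fix k assume "k < y"
    then obtain v where "beval s f (k # xs) = Some v" "v > 0" using h by blast
    then have "eval f (k # xs) v" using 6(1) by metis
    then show "\<exists>v. eval f (k # xs) v \<and> v > 0" using \<open>v > 0\<close> by blast
  qed
  moreover have "eval f (y # xs) 0" using 6(1) h(2) by metis
  ultimately show ?case by (rule eval_Mu[rotated])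
qed

lemma prrec_mono:
  assumes "\<And>ys y. F ys = Some y \<Longrightarrow> F' ys = Some y" "\<And>ys y. G ys = Some y \<Longrightarrow> G' ys = Some y"
  shows "prrec F G m ys = Some y \<Longrightarrow> prrec F' G' m ys = Some y"
proof (induction m arbitrary: y)
  case 0 then show ?case using assms by auto
next
  case (Suc m)
  then obtain z where "prrec F G m ys = Some z" "G (z # m # ys) = Some y"
    by (auto split: option.splits)
  then show ?case using Suc assms by auto
qed

lemma beval_mono: "beval s r xs = Some y \<Longrightarrow> s \<le> s' \<Longrightarrow> beval s' r xs = Some y"
proof (induction s r xs arbitrary: y rule: beval.induct)
  case (4 s f gs xs)
  let ?vs = "map (\<lambda>g. beval s g xs) gs"
  let ?vs' = "map (\<lambda>g. beval s' g xs) gs"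
  have nn: "None \<notin> set ?vs" and fy: "beval s f (map the ?vs) = Some y"
    using 4(3) by (auto simp: Let_def split: if_splits)
  have eq: "?vs' = ?vs"
  proof (rule map_cong[OF refl])
    fix g assume g: "g \<in> set gs"
    then obtain v where "beval s g xs = Some v" using nn by force
    then show "beval s' g xs = beval s g xs" using 4(1)[OF g] 4(4) by auto
  qed
  have "beval s' (Comp f gs) xs = beval s' f (map the ?vs)"
    by (simp only: beval.simps Let_def eq) (simp only: nn if_False)
  then show ?case using 4(2)[OF refl] nn fy 4(4) by simp
next
  case (5 s f g xs)
  then obtain m ys where xs: "xs = m # ys" by (cases xs) auto
  have "prrec (beval s f) (beval s g) m ys = Some y" using 5(3) xs by simp
  then have "prrec (beval s' f) (beval s' g) m ys = Some y"
    by (rule prrec_mono[rotated 2]) (use 5(1,2,4) xs in auto)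
  then show ?case using xs by simp
next
  case (6 s f xs)
  from 6(2) have h: "y < s" "beval s f (y # xs) = Some 0" "\<forall>k<y. \<exists>v. beval s f (k # xs) = Some v \<and> v > 0"
    by (auto simp: msearch_Some)
  have "\<forall>k<y. \<exists>v. beval s' f (k # xs) = Some v \<and> v > 0"
  proof (intro allI impI)
    fix k assume "k < y"
    then obtain v where "beval s f (k # xs) = Some v" "v > 0" using h by blast
    then have "beval s' f (k # xs) = Some v" using 6(1) 6(3) by metis
    then show "\<exists>v. beval s' f (k # xs) = Some v \<and> v > 0" using \<open>v > 0\<close> by blast
  qed
  moreover have "beval s' f (y # xs) = Some 0" using 6(1) h(2) 6(3) by metis
  ultimately show ?case using h 6(3) unfolding beval.simps msearch_Some by simp
next
  case (1 s xs) then show ?case by simp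
next
  case (2 s xs) then show ?case by simp
next
  case (3 s i xs) then show ?case by simp
qed



definition evf :: "recf \<Rightarrow> nat list \<Rightarrow> nat \<Rightarrow> bool" where
  "evf r xs y \<longleftrightarrow> (\<exists>s. \<forall>s'\<ge>s. beval s' r xs = Some y)"

lemma fin_uniform: fixes y :: nat and P :: "nat \<Rightarrow> nat \<Rightarrow> bool" shows "(\<forall>k<y. \<exists>s. \<forall>s'\<ge>s. P k s') \<Longrightarrow> \<exists>s. \<forall>k<y. \<forall>s'\<ge>s. P k s'"
proof (induction y)
  case 0 then show ?case by auto
next
  case (Suc y)
  then obtain s1 where s1: "\<forall>k<y. \<forall>s'\<ge>s1. P k s'" by auto
  obtain s2 where s2: "\<forall>s'\<ge>s2. P y s'" using Suc.prems by auto
  show ?case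
  proof (rule exI[of _ "max s1 s2"], intro allI impI)
    fix k s' assume "k < Suc y" "s' \<ge> max s1 s2"
    then have "s1 \<le> s'" "s2 \<le> s'" "k < y \<or> k = y" by auto
    then show "P k s'" using s1 s2 by blast
  qed
qed

lemma list_uniform:
  "list_all2 (\<lambda>g y. evf g xs y) gs ys \<Longrightarrow> \<exists>s. \<forall>s'\<ge>s. map (\<lambda>g. beval s' g xs) gs = map Some ys"
proof (induction rule: list_all2_induct)
  case Nil then show ?case by auto
next
  case (Cons g gs y ys)
  then obtain s1 where s1: "\<forall>s'\<ge>s1. map (\<lambda>g. beval s' g xs) gs = map Some ys" by auto
  obtain s2 where s2: "\<forall>s'\<ge>s2. beval s' g xs = Some y" using Cons(1) unfolding evf_def by auto
  show ?case by (rule exI[of _ "max s1 s2"]) (simp add: s1 s2)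
qed

lemma beval_complete: "eval r xs y \<Longrightarrow> evf r xs y"
proof (induction rule: eval.induct)
  case (eval_Zero xs) then show ?case unfolding evf_def by simp
next
  case (eval_Succ x xs) then show ?case unfolding evf_def by simp
next
  case (eval_Proj i xs) then show ?case unfolding evf_def by simp
next
  case (eval_Comp xs gs ys f y)
  have "list_all2 (\<lambda>g y. evf g xs y) gs ys" using eval_Comp(1) by (rule list_all2_mono) simp
  then obtain s1 where s1: "\<forall>s'\<ge>s1. map (\<lambda>g. beval s' g xs) gs = map Some ys" using list_uniform by blast
  obtain s2 where s2: "\<forall>s'\<ge>s2. beval s' f ys = Some y" using eval_Comp(2) unfolding evf_def by auto
  have "beval s' (Comp f gs) xs = Some y" if "s' \<ge> max s1 s2" for s'
  proof -
    have m: "map (\<lambda>g. beval s' g xs) gs = map Some ys" using s1 that by simp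
    have "beval s' (Comp f gs) xs = (if None \<in> set (map Some ys) then None else beval s' f (map the (map Some ys)))"
      by (simp only: beval.simps Let_def m)
    also have "\<dots> = beval s' f ys" by (auto simp: comp_def)
    finally show ?thesis using s2 that by simp
  qed
  then show ?case unfolding evf_def by blast
next
  case (eval_Pr0 f xs y)
  then show ?case unfolding evf_def by simp
next
  case (eval_PrS f g n xs z y)
  obtain s1 where s1: "\<forall>s'\<ge>s1. beval s' (PrRec f g) (n # xs) = Some z" using eval_PrS(3) unfolding evf_def by auto
  obtain s2 where s2: "\<forall>s'\<ge>s2. beval s' g (z # n # xs) = Some y" using eval_PrS(4) unfolding evf_def by auto
  show ?case unfolding evf_def
    by (rule exI[of _ "max s1 s2"]) (use s1 s2 in simp)
next
  case (eval_Mu f y xs)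
  have "\<forall>k<y. \<exists>s. \<forall>s'\<ge>s. \<exists>v. beval s' f (k # xs) = Some v \<and> v > 0"
  proof (intro allI impI)
    fix k assume "k < y"
    then obtain v where "eval f (k # xs) v \<and> evf f (k # xs) v" "v > 0" using eval_Mu(3) by blast
    then show "\<exists>s. \<forall>s'\<ge>s. \<exists>v. beval s' f (k # xs) = Some v \<and> v > 0" unfolding evf_def by blast
  qed
  then obtain s1 where s1: "\<forall>k<y. \<forall>s'\<ge>s1. \<exists>v. beval s' f (k # xs) = Some v \<and> v > 0"
    using fin_uniform[where P="\<lambda>k s'. \<exists>v. beval s' f (k # xs) = Some v \<and> v > 0"] by blast
  obtain s2 where s2: "\<forall>s'\<ge>s2. beval s' f (y # xs) = Some 0" using eval_Mu(2) unfolding evf_def by auto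
  show ?case unfolding evf_def
    by (rule exI[of _ "max (max s1 s2) (Suc y)"]) (use s1 s2 in \<open>simp add: msearch_Some\<close>)
qed



definition pr :: "recf \<Rightarrow> nat \<Rightarrow> (nat list \<Rightarrow> nat) \<Rightarrow> bool" where
  "pr r n F \<longleftrightarrow> (\<forall>xs. length xs = n \<longrightarrow> eval r xs (F xs))"

definition prs :: "recf list \<Rightarrow> nat \<Rightarrow> (nat list \<Rightarrow> nat list) \<Rightarrow> bool" where
  "prs gs n H \<longleftrightarrow> (\<forall>xs. length xs = n \<longrightarrow> list_all2 (\<lambda>g y. eval g xs y) gs (H xs))"

lemma prs_Nil: "prs [] n (\<lambda>_. [])"
  unfolding prs_def by simp

lemma prs_Cons: "pr g n G \<Longrightarrow> prs gs n H \<Longrightarrow> prs (g # gs) n (\<lambda>xs. G xs # H xs)"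
  unfolding prs_def pr_def by simp

lemma prs_len: "prs gs n H \<Longrightarrow> length xs = n \<Longrightarrow> length (H xs) = length gs"
  unfolding prs_def by (metis list_all2_lengthD)

lemma pr_Zero: "pr Zero n (\<lambda>_. 0)"
  unfolding pr_def by (auto intro: eval_Zero)

lemma pr_Proj: "i < n \<Longrightarrow> pr (Proj i) n (\<lambda>xs. xs ! i)"
  unfolding pr_def by (auto intro: eval_Proj)

lemma pr_Comp: "pr f (length gs) F \<Longrightarrow> prs gs n H \<Longrightarrow> pr (Comp f gs) n (\<lambda>xs. F (H xs))"
  unfolding pr_def
proof (intro allI impI)
  fix xs :: "nat list" assume a: "\<forall>xs. length xs = length gs \<longrightarrow> eval f xs (F xs)" "prs gs n H" "length xs = n"
  have l: "list_all2 (\<lambda>g y. eval g xs y) gs (H xs)" using a(2,3) unfolding prs_def by auto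
  moreover have "eval f (H xs) (F (H xs))" using a(1) l by (metis list_all2_lengthD)
  ultimately show "eval (Comp f gs) xs (F (H xs))" by (rule eval_Comp)
qed

lemma pr_Comp1: "pr f 1 F \<Longrightarrow> pr g n G \<Longrightarrow> pr (Comp f [g]) n (\<lambda>xs. F [G xs])"
  using pr_Comp[of f "[g]" F n "\<lambda>xs. [G xs]"] prs_Cons[OF _ prs_Nil] by simp

lemma pr_Comp2: "pr f 2 F \<Longrightarrow> pr g n G \<Longrightarrow> pr h n H \<Longrightarrow> pr (Comp f [g, h]) n (\<lambda>xs. F [G xs, H xs])"
  using pr_Comp[of f "[g, h]" F n "\<lambda>xs. [G xs, H xs]"] prs_Cons[OF _ prs_Cons[OF _ prs_Nil]]
  by (simp add: numeral_2_eq_2)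

lemma pr_Succ: "pr Succ 1 (\<lambda>xs. Suc (xs ! 0))"
  unfolding pr_def
proof (intro allI impI)
  fix xs :: "nat list" assume "length xs = 1"
  then obtain x where "xs = [x]" by (metis One_nat_def length_0_conv length_Suc_conv)
  then show "eval Succ xs (Suc (xs ! 0))" by (auto intro: eval_Succ)
qed

lemma pr_PrRec:
  assumes "pr f n F" "pr g (Suc (Suc n)) G"
  shows "pr (PrRec f g) (Suc n) (\<lambda>xs. rec_nat (F (tl xs)) (\<lambda>m z. G (z # m # tl xs)) (hd xs))"
  unfolding pr_def
proof (intro allI impI)
  fix xs :: "nat list" assume "length xs = Suc n"
  then obtain m ys where xs: "xs = m # ys" "length ys = n" by (metis length_Suc_conv)
  have "eval (PrRec f g) (k # ys) (rec_nat (F ys) (\<lambda>m z. G (z # m # ys)) k)" for k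
  proof (induction k)
    case 0 then show ?case using assms(1) xs(2) unfolding pr_def by (auto intro: eval_Pr0)
  next
    case (Suc k) then show ?case using assms(2) xs(2) unfolding pr_def by (auto intro: eval_PrS)
  qed
  then show "eval (PrRec f g) xs (rec_nat (F (tl xs)) (\<lambda>m z. G (z # m # tl xs)) (hd xs))" using xs by simp
qed

lemma pr_Mu:
  assumes "pr f (Suc n) F" "\<And>xs. length xs = n \<Longrightarrow> \<exists>y. F (y # xs) = 0"
  shows "pr (Mu f) n (\<lambda>xs. LEAST y. F (y # xs) = 0)"
  unfolding pr_def
proof (intro allI impI)
  fix xs :: "nat list" assume l: "length xs = n"
  let ?y = "LEAST y. F (y # xs) = 0"
  have "F (?y # xs) = 0" using assms(2)[OF l] by (metis (mono_tags, lifting) LeastI)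
  then have "eval f (?y # xs) 0" using assms(1) l unfolding pr_def by (metis length_Cons)
  moreover have "\<forall>k<?y. \<exists>v. eval f (k # xs) v \<and> v > 0"
  proof (intro allI impI)
    fix k assume "k < ?y"
    then have "F (k # xs) \<noteq> 0" using not_less_Least by blast
    then show "\<exists>v. eval f (k # xs) v \<and> v > 0" using assms(1) l unfolding pr_def
      by (metis length_Cons gr0I)
  qed
  ultimately show "eval (Mu f) xs ?y" by (rule eval_Mu)
qed

lemma pr_cong: "pr r n F \<Longrightarrow> (\<And>xs. length xs = n \<Longrightarrow> F xs = G xs) \<Longrightarrow> pr r n G"
  unfolding pr_def by auto

primrec cn :: "nat \<Rightarrow> recf" where
  "cn 0 = Zero"
| "cn (Suc c) = Comp Succ [cn c]"

lemma pr_cn: "pr (cn c) n (\<lambda>_. c)"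
proof (induction c)
  case 0 then show ?case by (simp add: pr_Zero)
next
  case (Suc c)
  show ?case using pr_Comp1[OF pr_Succ Suc] by simp
qed

definition "addR = PrRec (Proj 0) (Comp Succ [Proj 0])"
definition "predR = PrRec Zero (Proj 1)"
definition "subR = PrRec (Proj 0) (Comp predR [Proj 0])"
definition "mulR = PrRec Zero (Comp addR [Proj 0, Proj 2])"

lemma pr_addR: "pr addR 2 (\<lambda>xs. xs ! 0 + xs ! 1)"
proof -
  have "pr addR (Suc 1) (\<lambda>xs. rec_nat (tl xs ! 0) (\<lambda>m z. Suc z) (hd xs))"
    unfolding addR_def
    using pr_PrRec[OF pr_Proj[of 0 1] pr_Comp1[OF pr_Succ pr_Proj[of 0 "Suc (Suc 1)"]]] by simp
  then have h: "pr addR 2 (\<lambda>xs. rec_nat (tl xs ! 0) (\<lambda>m z. Suc z) (hd xs))" by (simp add: numeral_2_eq_2)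
  show ?thesis
  proof (rule pr_cong[OF h])
    fix xs :: "nat list" assume "length xs = 2"
    then obtain a b where "xs = [a, b]" by (metis (no_types) One_nat_def Suc_1 length_0_conv length_Suc_conv)
    then show "rec_nat (tl xs ! 0) (\<lambda>m. Suc) (hd xs) = xs ! 0 + xs ! 1" by (induction a arbitrary: xs) auto
  qed
qed

lemma pr_predR: "pr predR 1 (\<lambda>xs. xs ! 0 - 1)"
proof -
  have "pr predR (Suc 0) (\<lambda>xs. rec_nat 0 (\<lambda>m z. m) (hd xs))"
    unfolding predR_def using pr_PrRec[OF pr_Zero pr_Proj[of 1 "Suc (Suc 0)"]] by simp
  then have h: "pr predR 1 (\<lambda>xs. rec_nat 0 (\<lambda>m z. m) (hd xs))" by simp
  show ?thesis
  proof (rule pr_cong[OF h])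
    fix xs :: "nat list" assume "length xs = 1"
    then obtain a where "xs = [a]" by (metis One_nat_def length_0_conv length_Suc_conv)
    then show "rec_nat 0 (\<lambda>m z. m) (hd xs) = xs ! 0 - 1" by (cases a) auto
  qed
qed

lemma pr_subR: "pr subR 2 (\<lambda>xs. xs ! 1 - xs ! 0)"
proof -
  have "pr subR (Suc 1) (\<lambda>xs. rec_nat (tl xs ! 0) (\<lambda>m z. z - 1) (hd xs))"
    unfolding subR_def
    using pr_PrRec[OF pr_Proj[of 0 1] pr_Comp1[OF pr_predR pr_Proj[of 0 "Suc (Suc 1)"]]] by simp
  then have h: "pr subR 2 (\<lambda>xs. rec_nat (tl xs ! 0) (\<lambda>m z. z - 1) (hd xs))" by (simp add: numeral_2_eq_2)
  show ?thesis
  proof (rule pr_cong[OF h])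
    fix xs :: "nat list" assume "length xs = 2"
    then obtain a b where "xs = [a, b]" by (metis (no_types) One_nat_def Suc_1 length_0_conv length_Suc_conv)
    then show "rec_nat (tl xs ! 0) (\<lambda>m z. z - 1) (hd xs) = xs ! 1 - xs ! 0" by (induction a arbitrary: xs) auto
  qed
qed

lemma pr_mulR: "pr mulR 2 (\<lambda>xs. xs ! 0 * xs ! 1)"
proof -
  have "pr mulR (Suc 1) (\<lambda>xs. rec_nat 0 (\<lambda>m z. z + tl xs ! 0) (hd xs))"
    unfolding mulR_def
    using pr_PrRec[OF pr_Zero pr_Comp2[OF pr_addR pr_Proj[of 0 "Suc (Suc 1)"] pr_Proj[of 2 "Suc (Suc 1)"]]] by simp
  then have h: "pr mulR 2 (\<lambda>xs. rec_nat 0 (\<lambda>m z. z + tl xs ! 0) (hd xs))" by (simp add: numeral_2_eq_2)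
  show ?thesis
  proof (rule pr_cong[OF h])
    fix xs :: "nat list" assume "length xs = 2"
    then obtain a b where "xs = [a, b]" by (metis (no_types) One_nat_def Suc_1 length_0_conv length_Suc_conv)
    then show "rec_nat 0 (\<lambda>m z. z + tl xs ! 0) (hd xs) = xs ! 0 * xs ! 1" by (induction a arbitrary: xs) auto
  qed
qed

definition "add2 a b = Comp addR [a, b]"
definition "sub2 a b = Comp subR [b, a]"
definition "mul2 a b = Comp mulR [a, b]"
definition "suc1 a = Comp Succ [a]"
definition "pred1 a = Comp predR [a]"
definition "sg1 a = sub2 (cn 1) (sub2 (cn 1) a)"
definition "eq2 a b = sub2 (cn 1) (add2 (sub2 a b) (sub2 b a))"
definition "lt2 a b = sg1 (sub2 b a)"

lemma pr_add2: "pr a n A \<Longrightarrow> pr b n B \<Longrightarrow> pr (add2 a b) n (\<lambda>xs. A xs + B xs)"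
  unfolding add2_def using pr_Comp2[OF pr_addR] by simp
lemma pr_sub2: "pr a n A \<Longrightarrow> pr b n B \<Longrightarrow> pr (sub2 a b) n (\<lambda>xs. A xs - B xs)"
  unfolding sub2_def using pr_Comp2[OF pr_subR] by simp
lemma pr_mul2: "pr a n A \<Longrightarrow> pr b n B \<Longrightarrow> pr (mul2 a b) n (\<lambda>xs. A xs * B xs)"
  unfolding mul2_def using pr_Comp2[OF pr_mulR] by simp
lemma pr_suc1: "pr a n A \<Longrightarrow> pr (suc1 a) n (\<lambda>xs. Suc (A xs))"
  unfolding suc1_def using pr_Comp1[OF pr_Succ] by simp
lemma pr_pred1: "pr a n A \<Longrightarrow> pr (pred1 a) n (\<lambda>xs. A xs - 1)"
  unfolding pred1_def using pr_Comp1[OF pr_predR] by simp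
lemma pr_sg1: "pr a n A \<Longrightarrow> pr (sg1 a) n (\<lambda>xs. if A xs = 0 then 0 else 1)"
  unfolding sg1_def by (rule pr_cong, rule pr_sub2[OF pr_cn pr_sub2[OF pr_cn]]) auto
lemma pr_eq2: "pr a n A \<Longrightarrow> pr b n B \<Longrightarrow> pr (eq2 a b) n (\<lambda>xs. if A xs = B xs then 1 else 0)"
  unfolding eq2_def by (rule pr_cong, rule pr_sub2[OF pr_cn pr_add2[OF pr_sub2 pr_sub2]]) auto
lemma pr_lt2: "pr a n A \<Longrightarrow> pr b n B \<Longrightarrow> pr (lt2 a b) n (\<lambda>xs. if A xs < B xs then 1 else 0)"
  unfolding lt2_def by (rule pr_cong, rule pr_sg1[OF pr_sub2]) auto



definition projs :: "nat \<Rightarrow> nat \<Rightarrow> recf list" where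
  "projs c m = map (\<lambda>i. Proj (i + c)) [0..<m]"

lemma prs_projs: "c + m \<le> n \<Longrightarrow> prs (projs c m) n (\<lambda>xs. take m (drop c xs))"
  unfolding prs_def projs_def list_all2_conv_all_nth
  by (auto intro!: eval_Proj[of "_ + c", simplified] simp: add.commute)

lemma prs_map: "(\<And>g. g \<in> set gs \<Longrightarrow> pr (h g) n (G g)) \<Longrightarrow> prs (map h gs) n (\<lambda>xs. map (\<lambda>g. G g xs) gs)"
  unfolding prs_def pr_def list_all2_conv_all_nth by auto

lemma length_projs[simp]: "length (projs c m) = m" by (simp add: projs_def)

definition bminR :: "nat \<Rightarrow> recf \<Rightarrow> recf" where
  "bminR N p = PrRec (cn 0) (add2 (Proj 0) (mul2 (eq2 (Proj 0) (Proj 1)) (sg1 (Comp p (Proj 1 # projs 2 N)))))"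

lemma bmin_rec:
  fixes P :: "nat \<Rightarrow> nat"
  shows "rec_nat 0 (\<lambda>m z. z + (if z = m then 1 else 0) * (if P m = 0 then 0 else 1)) t
     = (if \<exists>y<t. P y = 0 then LEAST y. P y = 0 else t)"
proof (induction t)
  case 0 then show ?case by simp
next
  case (Suc t)
  show ?case
  proof (cases "\<exists>y<t. P y = 0")
    case True
    then have "(LEAST y. P y = 0) < t" by (meson Least_le le_less_trans)
    then show ?thesis using Suc True by (auto intro: less_SucI)
  next
    case False
    show ?thesis
    proof (cases "P t = 0")
      case True
      have "(LEAST y. P y = 0) = t"
        by (rule Least_equality) (use True False in \<open>auto simp: not_less\<close>)
      then show ?thesis using Suc False True by auto
    next
      case f2: False
      have "\<not> (\<exists>y<Suc t. P y = 0)" using False f2 less_Suc_eq by auto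
      then show ?thesis using Suc False f2 by auto
    qed
  qed
qed

definition bminv :: "(nat \<Rightarrow> nat) \<Rightarrow> nat \<Rightarrow> nat" where
  "bminv P t = (if \<exists>y<t. P y = 0 then LEAST y. P y = 0 else t)"

lemma pr_bmin:
  assumes "pr p (Suc N) P"
  shows "pr (bminR N p) (Suc N) (\<lambda>xs. bminv (\<lambda>y. P (y # tl xs)) (hd xs))"
proof -
  have pp: "pr (Comp p (Proj 1 # projs 2 N)) (Suc (Suc N)) (\<lambda>xs. P (xs ! 1 # take N (drop 2 xs)))"
    using pr_Comp[of p "Proj 1 # projs 2 N" P "Suc (Suc N)", OF _ prs_Cons[OF pr_Proj prs_projs]] assms
    by simp
  have g: "pr (add2 (Proj 0) (mul2 (eq2 (Proj 0) (Proj 1)) (sg1 (Comp p (Proj 1 # projs 2 N))))) (Suc (Suc N))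
     (\<lambda>xs. xs ! 0 + (if xs ! 0 = xs ! 1 then 1 else 0) * (if P (xs ! 1 # take N (drop 2 xs)) = 0 then 0 else 1))"
    by (rule pr_add2 pr_mul2 pr_eq2 pr_sg1 pr_Proj pp | simp)+
  have h: "pr (bminR N p) (Suc N) (\<lambda>xs. rec_nat 0 (\<lambda>m z. z + (if z = m then 1 else 0) * (if P (m # take N (tl xs)) = 0 then 0 else 1)) (hd xs))"
    unfolding bminR_def using pr_PrRec[OF pr_cn[of 0] g] by simp
  show ?thesis
  proof (rule pr_cong[OF h])
    fix xs :: "nat list" assume l: "length xs = Suc N"
    then have "take N (tl xs) = tl xs" by simp
    then show "rec_nat 0 (\<lambda>m z. z + (if z = m then 1 else 0) * (if P (m # take N (tl xs)) = 0 then 0 else 1)) (hd xs) =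
      bminv (\<lambda>y. P (y # tl xs)) (hd xs)"
      using bmin_rec[of "\<lambda>m. P (m # tl xs)" "hd xs"] by (simp add: bminv_def)
  qed
qed



primrec enc :: "nat option \<Rightarrow> nat" where
  "enc None = 0" | "enc (Some y) = Suc y"

primrec prodsg :: "recf list \<Rightarrow> recf" where
  "prodsg [] = cn 1"
| "prodsg (c # cs) = mul2 (sg1 c) (prodsg cs)"

lemma pr_Comp': "pr f k F \<Longrightarrow> k = length gs \<Longrightarrow> prs gs n H \<Longrightarrow> pr (Comp f gs) n (\<lambda>xs. F (H xs))"
  using pr_Comp by blast

lemma pr_prodsg: "(\<And>g. g \<in> set gs \<Longrightarrow> pr (h g) n (G g)) \<Longrightarrow>
   pr (prodsg (map h gs)) n (\<lambda>xs. if (\<forall>g\<in>set gs. G g xs \<noteq> 0) then 1 else 0)"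
proof (induction gs)
  case Nil then show ?case using pr_cn[of 1] by simp
next
  case (Cons g gs)
  have "pr (mul2 (sg1 (h g)) (prodsg (map h gs))) n
     (\<lambda>xs. (if G g xs = 0 then 0 else 1) * (if (\<forall>g\<in>set gs. G g xs \<noteq> 0) then 1 else 0))"
    using Cons by (intro pr_mul2 pr_sg1) auto
  then show ?case unfolding list.map prodsg.simps by (rule pr_cong) auto
qed

fun compile :: "recf \<Rightarrow> nat \<Rightarrow> recf" where
  "compile Zero n = cn 1"
| "compile Succ n = (if n = 0 then cn 0 else suc1 (suc1 (Proj 1)))"
| "compile (Proj i) n = (if i < n then suc1 (Proj (Suc i)) else cn 0)"
| "compile (Comp f gs) n = mul2 (prodsg (map (\<lambda>g. compile g n) gs))
      (Comp (compile f (length gs)) (Proj 0 # map (\<lambda>g. pred1 (compile g n)) gs))"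
| "compile (PrRec f g) n = (case n of 0 \<Rightarrow> cn 0 | Suc m \<Rightarrow>
      Comp (PrRec (compile f m) (mul2 (sg1 (Proj 0))
         (Comp (compile g (Suc (Suc m))) (Proj 2 # pred1 (Proj 0) # Proj 1 # projs 3 m))))
       (Proj 1 # Proj 0 # projs 2 m))"
| "compile (Mu f) n = (let cf = compile f (Suc n);
      Y = Comp (bminR (Suc n) (sub2 (Comp cf (Proj 1 # Proj 0 # projs 2 n)) (cn 1))) (Proj 0 # Proj 0 # projs 1 n)
    in mul2 (lt2 Y (Proj 0)) (mul2 (eq2 (Comp cf (Proj 0 # Y # projs 1 n)) (cn 1)) (suc1 Y)))"

lemma mu_sem:
  fixes F :: "nat \<Rightarrow> nat option" and s :: nat
  defines "ys \<equiv> bminv (\<lambda>y. enc (F y) - 1) s"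
  shows "(if ys < s then 1 else 0) * ((if enc (F ys) = 1 then 1 else 0) * Suc ys) = enc (msearch F s)"
proof (cases "\<exists>y<s. enc (F y) - 1 = 0")
  case True
  then obtain y1 where y1: "y1 < s" "enc (F y1) - 1 = 0" by blast
  have ye: "ys = (LEAST y. enc (F y) - 1 = 0)" using True ys_def by (simp add: bminv_def)
  have y0: "enc (F ys) - 1 = 0" unfolding ye by (rule LeastI[of _ y1]) (use y1 in simp)
  have ylt: "ys < s" unfolding ye using y1 by (meson Least_le le_less_trans)
  have below: "\<forall>k<ys. \<exists>v. F k = Some v \<and> v > 0"
  proof (intro allI impI)
    fix k assume "k < ys"
    then have "enc (F k) - 1 \<noteq> 0" unfolding ye using not_less_Least by blast
    then show "\<exists>v. F k = Some v \<and> v > 0" by (cases "F k") auto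
  qed
  show ?thesis
  proof (cases "F ys")
    case None
    have "msearch F s = None"
    proof (rule ccontr)
      assume "msearch F s \<noteq> None"
      then obtain y where "msearch F s = Some y" by auto
      then have h: "y < s" "F y = Some 0" "\<forall>k<y. \<exists>v. F k = Some v \<and> v > 0" by (auto simp: msearch_Some)
      have "\<not> y < ys" using h(2) below by fastforce
      moreover have "\<not> ys < y" using h(3) None by fastforce
      moreover have "y \<noteq> ys" using h(2) None by auto
      ultimately show False by simp
    qed
    then show ?thesis using None by simp
  next
    case (Some v)
    then have "v = 0" using y0 by simp
    then have "msearch F s = Some ys" using ylt below Some by (simp add: msearch_Some)
    then show ?thesis using ylt Some \<open>v = 0\<close> by simp
  qed
next
  case False
  then have "ys = s" unfolding ys_def bminv_def by (simp only: False if_False)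
  moreover have "msearch F s = None"
  proof (rule ccontr)
    assume "msearch F s \<noteq> None"
    then obtain y where "msearch F s = Some y" by auto
    then have "y < s" "F y = Some 0" by (auto simp: msearch_Some)
    then show False using False by fastforce
  qed
  ultimately show ?thesis by simp
qed

abbreviation sem :: "recf \<Rightarrow> nat list \<Rightarrow> nat" where
  "sem r xs \<equiv> enc (beval (hd xs) r (tl xs))"

lemma compile_correct: "pr (compile r n) (Suc n) (sem r)"
proof (induction r n rule: compile.induct)
  case (1 n)
  show ?case unfolding compile.simps by (rule pr_cong[OF pr_cn]) simp
next
  case (2 n)
  show ?case
  proof (cases "n = 0")
    case True
    then have e: "compile Succ n = cn 0" by simp
    show ?thesis unfolding e by (rule pr_cong[OF pr_cn]) (use True in \<open>auto simp: length_Suc_conv\<close>)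
  next
    case False
    have h: "pr (suc1 (suc1 (Proj 1))) (Suc n) (\<lambda>xs. Suc (Suc (xs ! 1)))"
      using False by (intro pr_suc1 pr_Proj) auto
    have e: "compile Succ n = suc1 (suc1 (Proj 1))" using False by simp
    show ?thesis unfolding e
      by (rule pr_cong[OF h]) (use False in \<open>auto simp: length_Suc_conv split: list.splits\<close>)
  qed
next
  case (3 i n)
  show ?case
  proof (cases "i < n")
    case False
    then have e: "compile (Proj i) n = cn 0" by simp
    show ?thesis unfolding e by (rule pr_cong[OF pr_cn]) (use False in \<open>auto simp: length_Suc_conv split: list.splits\<close>)
  next
    case True
    have h: "pr (suc1 (Proj (Suc i))) (Suc n) (\<lambda>xs. Suc (xs ! Suc i))"
      using True by (intro pr_suc1 pr_Proj) auto
    have e: "compile (Proj i) n = suc1 (Proj (Suc i))" using True by simp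
    show ?thesis unfolding e
      by (rule pr_cong[OF h]) (use True in \<open>auto simp: length_Suc_conv\<close>)
  qed
next
  case (4 f gs n)
  have p1: "pr (prodsg (map (\<lambda>g. compile g n) gs)) (Suc n)
     (\<lambda>xs. if (\<forall>g\<in>set gs. sem g xs \<noteq> 0) then 1 else 0)"
    by (rule pr_prodsg) (rule 4(1))
  have ps: "prs (Proj 0 # map (\<lambda>g. pred1 (compile g n)) gs) (Suc n)
      (\<lambda>xs. xs ! 0 # map (\<lambda>g. sem g xs - 1) gs)"
    by (intro prs_Cons pr_Proj prs_map pr_pred1 4(1)) auto
  have p2: "pr (Comp (compile f (length gs)) (Proj 0 # map (\<lambda>g. pred1 (compile g n)) gs)) (Suc n)
      (\<lambda>xs. sem f (xs ! 0 # map (\<lambda>g. sem g xs - 1) gs))"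
  proof -
    have l: "Suc (length gs) = length (Proj 0 # map (\<lambda>g. pred1 (compile g n)) gs)" by simp
    show ?thesis using pr_Comp[OF 4(2)[unfolded l] ps] .
  qed
  note p3 = pr_mul2[OF p1 p2]
  show ?case unfolding compile.simps
  proof (rule pr_cong[OF p3])
    fix xs :: "nat list" assume "length xs = Suc n"
    then obtain s ys where xs: "xs = s # ys" by (metis length_Suc_conv)
    let ?vs = "map (\<lambda>g. beval s g ys) gs"
    show "(if \<forall>g\<in>set gs. sem g xs \<noteq> 0 then 1 else 0) * sem f (xs ! 0 # map (\<lambda>g. sem g xs - 1) gs) = sem (Comp f gs) xs"
    proof (cases "None \<in> set ?vs")
      case True
      then obtain g where "g \<in> set gs" "beval s g ys = None" by auto
      then show ?thesis using True xs by (auto simp: Let_def)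
    next
      case False
      have a: "\<forall>g\<in>set gs. \<exists>v. beval s g ys = Some v"
      proof
        fix g assume "g \<in> set gs"
        then have "beval s g ys \<noteq> None" using False by (metis image_eqI set_map)
        then show "\<exists>v. beval s g ys = Some v" by blast
      qed
      have m: "map (\<lambda>g. sem g xs - 1) gs = map the ?vs" using xs a by (auto intro!: map_cong)
      have L: "(if \<forall>g\<in>set gs. sem g xs \<noteq> 0 then 1 else 0) = (1::nat)" using a xs by auto
      have c: "beval s (Comp f gs) ys = beval s f (map the ?vs)"
        by (simp only: beval.simps Let_def False if_False)
      have "sem f (xs ! 0 # map (\<lambda>g. sem g xs - 1) gs) = enc (beval s f (map the ?vs))"
        unfolding m using xs by simp
      then show ?thesis unfolding L using c xs by simp
    qed
  qed
next
  case (5 f g n)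
  show ?case
  proof (cases n)
    case 0
    then have e: "compile (PrRec f g) n = cn 0" by simp
    show ?thesis unfolding e
      by (rule pr_cong[OF pr_cn]) (use 0 in \<open>auto simp: length_Suc_conv\<close>)
  next
    case (Suc m)
    have hf: "pr (compile f m) (Suc m) (sem f)" using 5(1) Suc by simp
    have hg: "pr (compile g (Suc (Suc m))) (Suc (Suc (Suc m))) (sem g)" using 5(2) Suc by simp
    have ps1: "prs (Proj 2 # pred1 (Proj 0) # Proj 1 # projs 3 m) (Suc (Suc (Suc m)))
        (\<lambda>xs. xs ! 2 # (xs ! 0 - 1) # xs ! 1 # take m (drop 3 xs))"
      by (intro prs_Cons pr_Proj pr_pred1 prs_projs) auto
    have l1: "Suc (Suc (Suc m)) = length (Proj 2 # pred1 (Proj 0) # Proj 1 # projs 3 m)" by simp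
    note c1 = pr_Comp'[OF hg l1 ps1]
    have G: "pr (mul2 (sg1 (Proj 0)) (Comp (compile g (Suc (Suc m))) (Proj 2 # pred1 (Proj 0) # Proj 1 # projs 3 m)))
       (Suc (Suc (Suc m)))
       (\<lambda>xs. (if xs ! 0 = 0 then 0 else 1) * sem g (xs ! 2 # (xs ! 0 - 1) # xs ! 1 # take m (drop 3 xs)))"
      by (rule pr_mul2[OF pr_sg1[OF pr_Proj] c1]) simp
    note inner = pr_PrRec[OF hf G]
    have ps2: "prs (Proj 1 # Proj 0 # projs 2 m) (Suc (Suc m)) (\<lambda>xs. xs ! 1 # xs ! 0 # take m (drop 2 xs))"
      by (intro prs_Cons pr_Proj prs_projs) auto
    have l2: "Suc (Suc m) = length (Proj 1 # Proj 0 # projs 2 m)" by simp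
    note outer = pr_Comp'[OF inner l2 ps2]
    have e: "compile (PrRec f g) (Suc m) = Comp (PrRec (compile f m) (mul2 (sg1 (Proj 0))
         (Comp (compile g (Suc (Suc m))) (Proj 2 # pred1 (Proj 0) # Proj 1 # projs 3 m))))
       (Proj 1 # Proj 0 # projs 2 m)" by simp
    have key: "rec_nat (enc (beval s f ys)) (\<lambda>k z. (if z = 0 then 0 else 1) * enc (beval s g ((z - 1) # k # ys))) k
       = enc (prrec (beval s f) (beval s g) k ys)" for s k ys
      by (induction k) (auto split: option.splits)
    show ?thesis unfolding Suc e
      apply (rule pr_cong[OF outer])
      subgoal for xs
        using key by (auto simp: length_Suc_conv)
      done
  qed
next
  case (6 f n)
  have hf: "pr (compile f (Suc n)) (Suc (Suc n)) (sem f)" using 6 by simp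
  define cf where "cf = compile f (Suc n)"
  have ps1: "prs (Proj 1 # Proj 0 # projs 2 n) (Suc (Suc n)) (\<lambda>xs. xs ! 1 # xs ! 0 # take n (drop 2 xs))"
    by (intro prs_Cons pr_Proj prs_projs) auto
  have l1: "Suc (Suc n) = length (Proj 1 # Proj 0 # projs 2 n)" by simp
  note P = pr_sub2[OF pr_Comp'[OF hf[folded cf_def] l1 ps1] pr_cn[of 1]]
  note L = pr_bmin[OF P]
  have ps2: "prs (Proj 0 # Proj 0 # projs 1 n) (Suc n) (\<lambda>xs. xs ! 0 # xs ! 0 # take n (drop 1 xs))"
    by (intro prs_Cons pr_Proj prs_projs) auto
  have l2: "Suc (Suc n) = length (Proj 0 # Proj 0 # projs 1 n)" by simp
  define Y where "Y = Comp (bminR (Suc n) (sub2 (Comp cf (Proj 1 # Proj 0 # projs 2 n)) (cn 1))) (Proj 0 # Proj 0 # projs 1 n)"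
  note pY = pr_Comp'[OF L l2 ps2, folded Y_def]
  have z: "0 < Suc n" by simp
  have z2: "1 + n \<le> Suc n" by simp
  note ps3 = prs_Cons[OF pr_Proj[OF z] prs_Cons[OF pY prs_projs[OF z2]]]
  have l3: "Suc (Suc n) = length (Proj 0 # Y # projs 1 n)" by simp
  note pR = pr_mul2[OF pr_lt2[OF pY pr_Proj[OF z]] pr_mul2[OF pr_eq2[OF pr_Comp'[OF hf[folded cf_def] l3 ps3] pr_cn[of 1]] pr_suc1[OF pY]]]
  have e: "compile (Mu f) n = mul2 (lt2 Y (Proj 0)) (mul2 (eq2 (Comp cf (Proj 0 # Y # projs 1 n)) (cn 1)) (suc1 Y))"
    by (simp add: Y_def cf_def Let_def)
  show ?case unfolding e
    apply (rule pr_cong[OF pR])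
    apply (clarsimp simp: length_Suc_conv)
    subgoal for s ys
      using mu_sem[where F="\<lambda>y. beval s f (y # ys)" and s=s] by (auto split: if_splits)
    done
qed



lemma pr_Comp3: "pr f 3 F \<Longrightarrow> pr g1 n G1 \<Longrightarrow> pr g2 n G2 \<Longrightarrow> pr g3 n G3 \<Longrightarrow>
  pr (Comp f [g1, g2, g3]) n (\<lambda>xs. F [G1 xs, G2 xs, G3 xs])"
  using pr_Comp[of f "[g1, g2, g3]" F n "\<lambda>xs. [G1 xs, G2 xs, G3 xs]"]
    prs_Cons[OF _ prs_Cons[OF _ prs_Cons[OF _ prs_Nil]]]
  by (simp add: numeral_3_eq_3)

lemma pr_Comp4: "pr f 4 F \<Longrightarrow> pr g1 n G1 \<Longrightarrow> pr g2 n G2 \<Longrightarrow> pr g3 n G3 \<Longrightarrow> pr g4 n G4 \<Longrightarrow>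
  pr (Comp f [g1, g2, g3, g4]) n (\<lambda>xs. F [G1 xs, G2 xs, G3 xs, G4 xs])"
  using pr_Comp[of f "[g1, g2, g3, g4]" F n "\<lambda>xs. [G1 xs, G2 xs, G3 xs, G4 xs]"]
    prs_Cons[OF _ prs_Cons[OF _ prs_Cons[OF _ prs_Cons[OF _ prs_Nil]]]]
  by (simp add: eval_nat_numeral)

lemma pr_fun: "\<forall>n. eval r [n] (f n) \<Longrightarrow> pr r 1 (\<lambda>xs. f (xs ! 0))"
  unfolding pr_def by (auto simp: length_Suc_conv)

lemma len1: "length xs = 1 \<longleftrightarrow> (\<exists>a. xs = [a])" by (auto simp: length_Suc_conv)
lemma len2: "length xs = 2 \<longleftrightarrow> (\<exists>a b. xs = [a, b])" by (auto simp: length_Suc_conv numeral_2_eq_2)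
lemma len3: "length xs = 3 \<longleftrightarrow> (\<exists>a b c. xs = [a, b, c])" by (auto simp: length_Suc_conv numeral_3_eq_3)
lemma len4: "length xs = 4 \<longleftrightarrow> (\<exists>a b c d. xs = [a, b, c, d])" by (auto simp: length_Suc_conv eval_nat_numeral)

lemma pr_arity: "pr r n F \<Longrightarrow> n = m \<Longrightarrow> pr r m F" by simp

lemma pr_PrRec0: assumes "pr f 0 F" "pr g 2 G"
  shows "pr (PrRec f g) 1 (\<lambda>xs. rec_nat (F []) (\<lambda>m z. G [z, m]) (xs ! 0))"
proof -
  have g: "pr g (Suc (Suc 0)) G" using assms(2) by (simp add: numeral_2_eq_2)
  note h = pr_PrRec[OF assms(1) g]
  show ?thesis by (rule pr_cong[OF pr_arity[OF h]]) (auto simp: len1 length_Suc_conv)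
qed

lemma pr_PrRec1: assumes "pr f 1 F" "pr g 3 G"
  shows "pr (PrRec f g) 2 (\<lambda>xs. rec_nat (F [xs ! 1]) (\<lambda>m z. G [z, m, xs ! 1]) (xs ! 0))"
proof -
  have g: "pr g (Suc (Suc 1)) G" using assms(2) by (simp add: numeral_3_eq_3)
  note h = pr_PrRec[OF assms(1) g]
  show ?thesis by (rule pr_cong[OF pr_arity[OF h]]) (auto simp: len2 length_Suc_conv)
qed

lemma pr_Mu1: assumes "pr f 2 F" "\<forall>x. \<exists>y. F [y, x] = 0"
  shows "pr (Mu f) 1 (\<lambda>xs. LEAST y. F [y, xs ! 0] = 0)"
proof -
  have g: "pr f (Suc 1) F" using assms(1) by (simp add: numeral_2_eq_2)
  note h = pr_Mu[OF g]
  show ?thesis by (rule pr_cong[OF pr_arity[OF h]]) (use assms(2) in \<open>auto simp: len1 length_Suc_conv\<close>)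
qed

lemma pr_Mu2: assumes "pr f 3 F" "\<forall>x z. \<exists>y. F [y, x, z] = 0"
  shows "pr (Mu f) 2 (\<lambda>xs. LEAST y. F [y, xs ! 0, xs ! 1] = 0)"
proof -
  have g: "pr f (Suc 2) F" using assms(1) by (simp add: numeral_3_eq_3)
  note h = pr_Mu[OF g]
  show ?thesis by (rule pr_cong[OF pr_arity[OF h]]) (use assms(2) in \<open>auto simp: len2 length_Suc_conv\<close>)
qed

lemma pr_bmin3: assumes "pr p 4 P"
  shows "pr (bminR 3 p) 4 (\<lambda>xs. bminv (\<lambda>y. P [y, xs ! 1, xs ! 2, xs ! 3]) (xs ! 0))"
proof -
  have g: "pr p (Suc 3) P" using assms(1) by (simp add: eval_nat_numeral)
  note h = pr_bmin[OF g]
  show ?thesis by (rule pr_cong[OF pr_arity[OF h]]) (auto simp: len4 length_Suc_conv)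
qed

lemma pr_P: "pr (Proj 0) 1 (\<lambda>xs. xs ! 0)" "pr (Proj 0) 2 (\<lambda>xs. xs ! 0)" "pr (Proj 1) 2 (\<lambda>xs. xs ! 1)"
  "pr (Proj 0) 3 (\<lambda>xs. xs ! 0)" "pr (Proj 1) 3 (\<lambda>xs. xs ! 1)" "pr (Proj 2) 3 (\<lambda>xs. xs ! 2)"
  "pr (Proj 0) 4 (\<lambda>xs. xs ! 0)" "pr (Proj 1) 4 (\<lambda>xs. xs ! 1)" "pr (Proj 2) 4 (\<lambda>xs. xs ! 2)" "pr (Proj 3) 4 (\<lambda>xs. xs ! 3)"
  by (auto intro: pr_Proj)

locale constr =
  fixes r ra rb rc :: recf and af bf cf :: "nat \<Rightarrow> nat"
  assumes ra: "\<forall>n. eval ra [n] (af n)" and rb: "\<forall>n. eval rb [n] (bf n)" and rc: "\<forall>n. eval rc [n] (cf n)"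
begin

definition "T m x = enc (beval m r [x])"
definition "cnt n m = (\<Sum>x<n. if T m x = 0 then 0 else (1::nat))"
definition "Q k p m n = (if k * p < n \<and> k * n * af m < k * cnt n m * Suc (cf m) + n * Suc (cf m) + k * n * bf m then 0 else (1::nat))"
definition "nsel k p m = bminv (\<lambda>n. Q k p m n) (Suc m)"
definition "okv m k p = (if nsel k p m < Suc m \<and> k \<le> m then 0 else (1::nat))"
definition "M k p = (LEAST m. okv m k p = 0)"
definition "N k = rec_nat 0 (\<lambda>j z. nsel (Suc j) z (M (Suc j) z)) k"
definition "Mseq k = M k (N (k - 1))"
definition "K x = (LEAST k. x < N k)"
definition "chi x = (if T (Mseq (K x)) x = 0 then 0 else (1::nat))"

definition "rT = compile r 1"
definition "rcnt = PrRec (cn 0) (add2 (Proj 0) (sg1 (Comp rT [Proj 2, Proj 1])))"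
definition "rQ = (let am = Comp ra [Proj 3]; cm1 = suc1 (Comp rc [Proj 3]); bm = Comp rb [Proj 3];
   cntv = Comp rcnt [Proj 0, Proj 3] in
   sub2 (cn 1) (mul2 (lt2 (mul2 (Proj 1) (Proj 2)) (Proj 0))
     (lt2 (mul2 (mul2 (Proj 1) (Proj 0)) am)
          (add2 (add2 (mul2 (mul2 (Proj 1) cntv) cm1) (mul2 (Proj 0) cm1)) (mul2 (mul2 (Proj 1) (Proj 0)) bm)))))"
definition "rnsel = Comp (bminR 3 rQ) [suc1 (Proj 2), Proj 0, Proj 1, Proj 2]"
definition "rok = sub2 (cn 1) (mul2 (lt2 (Comp rnsel [Proj 1, Proj 2, Proj 0]) (suc1 (Proj 0))) (sub2 (cn 1) (lt2 (Proj 0) (Proj 1))))"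
definition "rM = Mu rok"
definition "rNk = Comp rnsel [Proj 0, Proj 1, rM]"
definition "rN = PrRec (cn 0) (Comp rNk [suc1 (Proj 1), Proj 0])"
definition "rMseq = Comp rM [Proj 0, Comp rN [pred1 (Proj 0)]]"
definition "rK = Mu (sub2 (cn 1) (lt2 (Proj 1) (Comp rN [Proj 0])))"
definition "rchi = sg1 (Comp rT [Comp rMseq [Comp rK [Proj 0]], Proj 0])"

lemma pr_rT: "pr rT 2 (\<lambda>xs. T (xs ! 0) (xs ! 1))"
  unfolding rT_def
  by (rule pr_cong[OF pr_arity[OF compile_correct[of r 1]]]) (auto simp: len2 T_def)

lemma pr_rcnt: "pr rcnt 2 (\<lambda>xs. cnt (xs ! 0) (xs ! 1))"
proof -
  note h = pr_PrRec1[OF pr_cn[of 0 1] pr_add2[OF pr_P(4) pr_sg1[OF pr_Comp2[OF pr_rT pr_P(6) pr_P(5)]]]]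
  have e: "rec_nat 0 (\<lambda>i z. z + (if T m i = 0 then 0 else 1)) n = cnt n m" for n m
    by (induction n) (auto simp: cnt_def)
  show ?thesis unfolding rcnt_def
    by (rule pr_cong[OF h]) (auto simp: len2 e)
qed

lemma pr_rQ: "pr rQ 4 (\<lambda>xs. Q (xs ! 1) (xs ! 2) (xs ! 3) (xs ! 0))"
proof -
  note am = pr_Comp1[OF pr_fun[OF ra] pr_P(10)]
  note bm = pr_Comp1[OF pr_fun[OF rb] pr_P(10)]
  note cm1 = pr_suc1[OF pr_Comp1[OF pr_fun[OF rc] pr_P(10)]]
  note cntv = pr_Comp2[OF pr_rcnt pr_P(7) pr_P(10)]
  note h = pr_sub2[OF pr_cn[of 1] pr_mul2[OF pr_lt2[OF pr_mul2[OF pr_P(8) pr_P(9)] pr_P(7)]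
     pr_lt2[OF pr_mul2[OF pr_mul2[OF pr_P(8) pr_P(7)] am]
          pr_add2[OF pr_add2[OF pr_mul2[OF pr_mul2[OF pr_P(8) cntv] cm1] pr_mul2[OF pr_P(7) cm1]] pr_mul2[OF pr_mul2[OF pr_P(8) pr_P(7)] bm]]]]]
  show ?thesis unfolding rQ_def Let_def
    by (rule pr_cong[OF h]) (auto simp: len4 Q_def)
qed

lemma pr_rnsel: "pr rnsel 3 (\<lambda>xs. nsel (xs ! 0) (xs ! 1) (xs ! 2))"
proof -
  note h = pr_Comp4[OF pr_bmin3[OF pr_rQ] pr_suc1[OF pr_P(6)] pr_P(4) pr_P(5) pr_P(6)]
  show ?thesis unfolding rnsel_def
    by (rule pr_cong[OF h]) (auto simp: len3 nsel_def)
qed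

lemma pr_rok: "pr rok 3 (\<lambda>xs. okv (xs ! 0) (xs ! 1) (xs ! 2))"
proof -
  note h = pr_sub2[OF pr_cn[of 1] pr_mul2[OF pr_lt2[OF pr_Comp3[OF pr_rnsel pr_P(5) pr_P(6) pr_P(4)] pr_suc1[OF pr_P(4)]]
     pr_sub2[OF pr_cn[of 1] pr_lt2[OF pr_P(4) pr_P(5)]]]]
  show ?thesis unfolding rok_def
    by (rule pr_cong[OF h]) (auto simp: len3 okv_def)
qed

lemma pr_rM: assumes "\<forall>k p. \<exists>m. okv m k p = 0" shows "pr rM 2 (\<lambda>xs. M (xs ! 0) (xs ! 1))"
proof -
  note h = pr_Mu2[OF pr_rok]
  show ?thesis unfolding rM_def
    by (rule pr_cong[OF h]) (use assms in \<open>auto simp: len2 M_def\<close>)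
qed

lemma pr_rN: assumes "\<forall>k p. \<exists>m. okv m k p = 0" shows "pr rN 1 (\<lambda>xs. N (xs ! 0))"
proof -
  note nk = pr_Comp3[OF pr_rnsel pr_P(2) pr_P(3) pr_rM[OF assms]]
  have nk': "pr rNk 2 (\<lambda>xs. nsel (xs ! 0) (xs ! 1) (M (xs ! 0) (xs ! 1)))"
    unfolding rNk_def by (rule pr_cong[OF nk]) (auto simp: len2)
  note h = pr_PrRec0[OF pr_cn[of 0 0] pr_Comp2[OF nk' pr_suc1[OF pr_P(3)] pr_P(2)]]
  show ?thesis unfolding rN_def
    by (rule pr_cong[OF h]) (auto simp: len1 N_def)
qed

lemma pr_rMseq: assumes "\<forall>k p. \<exists>m. okv m k p = 0" shows "pr rMseq 1 (\<lambda>xs. Mseq (xs ! 0))"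
proof -
  note h = pr_Comp2[OF pr_rM[OF assms] pr_P(1) pr_Comp1[OF pr_rN[OF assms] pr_pred1[OF pr_P(1)]]]
  show ?thesis unfolding rMseq_def
    by (rule pr_cong[OF h]) (auto simp: len1 Mseq_def)
qed

lemma pr_rK: assumes "\<forall>k p. \<exists>m. okv m k p = 0" "\<forall>x. \<exists>k. x < N k" shows "pr rK 1 (\<lambda>xs. K (xs ! 0))"
proof -
  note b = pr_sub2[OF pr_cn[of 1] pr_lt2[OF pr_P(3) pr_Comp1[OF pr_rN[OF assms(1)] pr_P(2)]]]
  have b': "pr (sub2 (cn 1) (lt2 (Proj 1) (Comp rN [Proj 0]))) 2 (\<lambda>xs. if xs ! 1 < N (xs ! 0) then 0 else 1)"
    by (rule pr_cong[OF b]) (auto simp: len2)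
  have h: "pr rK 1 (\<lambda>xs. LEAST y. (if xs ! 0 < N y then 0 else 1) = (0::nat))"
    unfolding rK_def by (rule pr_cong[OF pr_Mu1[OF b']]) (use assms(2) in auto)
  show ?thesis by (rule pr_cong[OF h]) (auto simp: K_def)
qed

lemma pr_rchi: assumes "\<forall>k p. \<exists>m. okv m k p = 0" "\<forall>x. \<exists>k. x < N k" shows "pr rchi 1 (\<lambda>xs. chi (xs ! 0))"
proof -
  note h = pr_sg1[OF pr_Comp2[OF pr_rT pr_Comp1[OF pr_rMseq[OF assms(1)] pr_Comp1[OF pr_rK[OF assms] pr_P(1)]] pr_P(1)]]
  show ?thesis unfolding rchi_def
    by (rule pr_cong[OF h]) (simp only: chi_def nth_Cons_0 nth_Cons_Suc One_nat_def)
qed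

lemma chi_computable: assumes "\<forall>k p. \<exists>m. okv m k p = 0" "\<forall>x. \<exists>k. x < N k"
  shows "computable_set {x. chi x = 1}"
  unfolding computable_set_def computable_fun_def
proof (rule exI[of _ rchi], intro allI)
  fix n
  have p: "\<forall>xs. length xs = 1 \<longrightarrow> eval rchi xs (chi (xs ! 0))" using pr_rchi[OF assms] unfolding pr_def .
  have ev: "eval rchi [n] (chi n)" using spec[OF p, of "[n]"] by simp
  have e: "(if n \<in> {x. chi x = 1} then 1 else 0) = chi n" by (auto simp: chi_def)
  show "eval rchi [n] (if n \<in> {x. chi x = 1} then 1 else 0)" unfolding e by (rule ev)
qed

end



lemma ineq_real:
  fixes k n C a b c :: nat
  assumes "k > 0" "n > 0" "k * n * a < k * C * Suc c + n * Suc c + k * n * b"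
  shows "(real a - real b) / real (Suc c) - 1 / real k < real C / real n"
proof -
  define cc where "cc = real (Suc c)"
  have h: "real k * real n * real a < real k * real C * cc + real n * cc + real k * real n * real b"
    unfolding cc_def using assms(3) by (metis (mono_tags) of_nat_less_iff of_nat_add of_nat_mult)
  have pk: "real k > 0" "real n > 0" "cc > 0" using assms by (auto simp: cc_def)
  let ?D = "real k * real n * cc"
  have D: "?D > 0" using pk by simp
  have e1: "((real a - real b) / cc - 1 / real k) * ?D = real k * real n * (real a - real b) - real n * cc"
    using pk by (simp add: field_simps)
  have e2: "(real C / real n) * ?D = real k * real C * cc"
    using pk by (simp add: field_simps)
  have "((real a - real b) / cc - 1 / real k) * ?D < (real C / real n) * ?D"
    unfolding e1 e2 using h by (simp add: algebra_simps)
  then have "(real a - real b) / cc - 1 / real k < real C / real n" using mult_less_cancel_right_pos[OF D] by blast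
  then show ?thesis unfolding cc_def .
qed

lemma bminv_lt: "bminv P t < t \<longleftrightarrow> (\<exists>y<t. P y = 0)"
proof
  assume "bminv P t < t"
  then show "\<exists>y<t. P y = 0" unfolding bminv_def by (cases "\<exists>y<t. P y = 0") auto
next
  assume h: "\<exists>y<t. P y = 0"
  then obtain y where y: "y < t" "P y = 0" by blast
  have "(LEAST y. P y = 0) \<le> y" using y(2) by (rule Least_le)
  then show "bminv P t < t" unfolding bminv_def using h y(1) by simp
qed

lemma bminv_zero: "bminv P t < t \<Longrightarrow> P (bminv P t) = 0"
proof -
  assume a: "bminv P t < t"
  then obtain y where y: "y < t" "P y = 0" using bminv_lt by blast
  then have "bminv P t = (LEAST y. P y = 0)" unfolding bminv_def by auto
  then show ?thesis using y(2) by (metis (mono_tags, lifting) LeastI)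
qed

context constr
begin

definition "Aset = {x. \<exists>y. eval r [x] y}"

lemma T_sound: "T m x \<noteq> 0 \<Longrightarrow> x \<in> Aset"
  unfolding T_def Aset_def by (cases "beval m r [x]") (auto dest: beval_sound)

lemma T_complete: "x \<in> Aset \<Longrightarrow> \<exists>s. \<forall>m\<ge>s. T m x \<noteq> 0"
  unfolding T_def Aset_def using beval_complete unfolding evf_def by fastforce

lemma T_uniform: "\<exists>s. \<forall>m\<ge>s. \<forall>x<n. (T m x \<noteq> 0 \<longleftrightarrow> x \<in> Aset)"
proof -
  have "\<forall>x<n. \<exists>s. \<forall>m\<ge>s. (T m x \<noteq> 0 \<longleftrightarrow> x \<in> Aset)"
  proof (intro allI impI)
    fix x :: nat
    show "\<exists>s. \<forall>m\<ge>s. (T m x \<noteq> 0 \<longleftrightarrow> x \<in> Aset)"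
    proof (cases "x \<in> Aset")
      case True
      then obtain s where "\<forall>m\<ge>s. T m x \<noteq> 0" using T_complete by blast
      then show ?thesis using True by auto
    next
      case False
      then have "\<forall>m. T m x = 0" using T_sound by blast
      then show ?thesis using False by simp
    qed
  qed
  from fin_uniform[where P="\<lambda>x m. (T m x \<noteq> 0 \<longleftrightarrow> x \<in> Aset)", OF this]
  obtain s where s: "\<forall>x<n. \<forall>m\<ge>s. (T m x \<noteq> 0 \<longleftrightarrow> x \<in> Aset)" by blast
  show ?thesis by (rule exI[of _ s]) (use s in simp)
qed

lemma cnt_card: "cnt n m = card {x. x < n \<and> T m x \<noteq> 0}"
proof -
  have "cnt n m = (\<Sum>x\<in>{x. x < n \<and> T m x \<noteq> 0}. 1)"
    unfolding cnt_def by (rule sum.mono_neutral_cong_right) auto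
  then show ?thesis by simp
qed

lemma cnt_eventually: "\<exists>s. \<forall>m\<ge>s. cnt n m = card (Aset \<inter> {..<n})"
proof -
  obtain s where s: "\<forall>m\<ge>s. \<forall>x<n. (T m x \<noteq> 0 \<longleftrightarrow> x \<in> Aset)" using T_uniform by blast
  have "cnt n m = card (Aset \<inter> {..<n})" if "m \<ge> s" for m
  proof -
    have "{x. x < n \<and> T m x \<noteq> 0} = Aset \<inter> {..<n}" using s that by auto
    then show ?thesis by (simp add: cnt_card)
  qed
  then show ?thesis by blast
qed

lemma okv_iff: "okv m k p = 0 \<longleftrightarrow> k \<le> m \<and> (\<exists>n\<le>m. k * p < n \<and> k * n * af m < k * cnt n m * Suc (cf m) + n * Suc (cf m) + k * n * bf m)"
  unfolding okv_def nsel_def bminv_lt Q_def by (auto simp: less_Suc_eq_le split: if_splits)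

end



lemma rho_ge0: "0 \<le> rho n S" unfolding rho_def by simp

lemma rho_le1: "rho n S \<le> 1"
proof -
  have "card (S \<inter> {..<n}) \<le> n" by (metis card_lessThan card_mono finite_lessThan inf_le2)
  then show ?thesis unfolding rho_def by (cases "n = 0") (auto simp: divide_le_eq_1)
qed

lemma ls_bounds: "0 \<le> limsup (\<lambda>n. ereal (rho (Suc n) S))" "limsup (\<lambda>n. ereal (rho (Suc n) S)) \<le> 1"
  by (rule le_Limsup, simp, simp add: rho_ge0) (rule Limsup_bounded, simp add: rho_le1)

lemma li_bounds: "0 \<le> liminf (\<lambda>n. ereal (rho (Suc n) S))" "liminf (\<lambda>n. ereal (rho (Suc n) S)) \<le> 1"
  by (rule Liminf_bounded, simp add: rho_ge0) (rule Liminf_le, simp, simp add: rho_le1)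

lemma ereal_01: "0 \<le> (L::ereal) \<Longrightarrow> L \<le> 1 \<Longrightarrow> ereal (real_of_ereal L) = L"
  by (cases L) auto

lemma ls_fin: "limsup (\<lambda>n. ereal (rho (Suc n) S)) = ereal (upper_density S)"
  unfolding upper_density_def using ereal_01[OF ls_bounds] by simp

lemma li_fin: "liminf (\<lambda>n. ereal (rho (Suc n) S)) = ereal (lower_density S)"
  unfolding lower_density_def using ereal_01[OF li_bounds] by simp

lemma ud_eventually: "\<epsilon> > 0 \<Longrightarrow> eventually (\<lambda>n. rho (Suc n) S < upper_density S + \<epsilon>) sequentially"
proof -
  assume e: "\<epsilon> > 0"
  have "ereal (upper_density S) \<ge> limsup (\<lambda>n. ereal (rho (Suc n) S))" using ls_fin by simp
  then have "\<forall>y>ereal (upper_density S). eventually (\<lambda>n. y > ereal (rho (Suc n) S)) sequentially"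
    by (rule Limsup_le_iff[THEN iffD1])
  moreover have "ereal (upper_density S + \<epsilon>) > ereal (upper_density S)" using e by simp
  ultimately have "eventually (\<lambda>n. ereal (upper_density S + \<epsilon>) > ereal (rho (Suc n) S)) sequentially"
    by blast
  then show ?thesis by simp
qed

lemma ud_frequently: "\<epsilon> > 0 \<Longrightarrow> frequently (\<lambda>n. rho (Suc n) S > upper_density S - \<epsilon>) sequentially"
proof (rule ccontr)
  assume e: "\<epsilon> > 0" and "\<not> frequently (\<lambda>n. rho (Suc n) S > upper_density S - \<epsilon>) sequentially"
  then have "eventually (\<lambda>n. \<not> rho (Suc n) S > upper_density S - \<epsilon>) sequentially"
    by (simp add: not_frequently)
  then have "eventually (\<lambda>n. ereal (rho (Suc n) S) \<le> ereal (upper_density S - \<epsilon>)) sequentially"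
    by (rule eventually_mono) simp
  then have "limsup (\<lambda>n. ereal (rho (Suc n) S)) \<le> ereal (upper_density S - \<epsilon>)" by (rule Limsup_bounded)
  then show False using e ls_fin[of S] by simp
qed

lemma ud_ge:
  assumes "\<forall>\<epsilon>>0. frequently (\<lambda>n. rho (Suc n) S > \<alpha> - \<epsilon>) sequentially"
  shows "\<alpha> \<le> upper_density S"
proof (rule ccontr)
  assume "\<not> \<alpha> \<le> upper_density S"
  define \<epsilon> where "\<epsilon> = (\<alpha> - upper_density S) / 2"
  have e: "\<epsilon> > 0" using \<open>\<not> \<alpha> \<le> upper_density S\<close> by (simp add: \<epsilon>_def)
  obtain N0 where N0: "\<forall>n\<ge>N0. rho (Suc n) S < upper_density S + \<epsilon>"
    using ud_eventually[OF e, of S] unfolding eventually_sequentially by blast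
  obtain n where n: "n \<ge> N0" "rho (Suc n) S > \<alpha> - \<epsilon>"
    using assms e unfolding frequently_sequentially by blast
  have "upper_density S + \<epsilon> = \<alpha> - \<epsilon>" by (simp add: \<epsilon>_def field_simps)
  then show False using N0 n by force
qed

lemma ud_mono: "S \<subseteq> S' \<Longrightarrow> upper_density S \<le> upper_density S'"
proof -
  assume "S \<subseteq> S'"
  then have "rho n S \<le> rho n S'" for n
    unfolding rho_def by (intro divide_right_mono) (auto intro!: card_mono)
  then have "limsup (\<lambda>n. ereal (rho (Suc n) S)) \<le> limsup (\<lambda>n. ereal (rho (Suc n) S'))"
    by (intro Limsup_mono) auto
  then show ?thesis unfolding ls_fin by simp
qed

lemma ld_zero:
  assumes "\<forall>\<epsilon>>0. frequently (\<lambda>n. rho (Suc n) S < \<epsilon>) sequentially"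
  shows "lower_density S = 0"
proof (rule ccontr)
  assume ne: "lower_density S \<noteq> 0"
  have "0 \<le> lower_density S" using li_bounds(1)[of S] unfolding li_fin by simp
  then have pos: "lower_density S > 0" using ne by simp
  have "ereal (lower_density S) \<le> liminf (\<lambda>n. ereal (rho (Suc n) S))" using li_fin by simp
  then have "\<forall>y<ereal (lower_density S). eventually (\<lambda>n. y < ereal (rho (Suc n) S)) sequentially"
    by (rule le_Liminf_iff[THEN iffD1])
  moreover have "ereal (lower_density S / 2) < ereal (lower_density S)" using pos by simp
  ultimately have "eventually (\<lambda>n. ereal (lower_density S / 2) < ereal (rho (Suc n) S)) sequentially"
    by blast
  then obtain N0 where N0: "\<forall>n\<ge>N0. lower_density S / 2 < rho (Suc n) S"
    unfolding eventually_sequentially by auto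
  have h2: "lower_density S / 2 > 0" using pos by simp
  have "\<forall>N. \<exists>n\<ge>N. rho (Suc n) S < lower_density S / 2"
    using assms h2 unfolding frequently_sequentially by blast
  then obtain n where "n \<ge> N0" "rho (Suc n) S < lower_density S / 2" by blast
  then show False using N0 by force
qed



lemma ineq_real_iff:
  fixes k n C a b c :: nat
  assumes "k > 0" "n > 0"
  shows "k * n * a < k * C * Suc c + n * Suc c + k * n * b \<longleftrightarrow> (real a - real b) / real (Suc c) - 1 / real k < real C / real n"
proof -
  define cc where "cc = real (Suc c)"
  have h: "k * n * a < k * C * Suc c + n * Suc c + k * n * b \<longleftrightarrow> real k * real n * real a < real k * real C * cc + real n * cc + real k * real n * real b"
    unfolding cc_def by (metis (mono_tags) of_nat_less_iff of_nat_add of_nat_mult)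
  have pk: "real k > 0" "real n > 0" "cc > 0" using assms by (auto simp: cc_def)
  let ?D = "real k * real n * cc"
  have D: "?D > 0" using pk by simp
  have e1: "((real a - real b) / cc - 1 / real k) * ?D = real k * real n * (real a - real b) - real n * cc"
    using pk by (simp add: field_simps)
  have e2: "(real C / real n) * ?D = real k * real C * cc"
    using pk by (simp add: field_simps)
  have "((real a - real b) / cc - 1 / real k < real C / real n) \<longleftrightarrow> ((real a - real b) / cc - 1 / real k) * ?D < (real C / real n) * ?D"
    by (rule mult_less_cancel_right_pos[OF D, symmetric])
  also have "\<dots> \<longleftrightarrow> real k * real n * real a < real k * real C * cc + real n * cc + real k * real n * real b"
    unfolding e1 e2 by (simp add: algebra_simps)
  finally show ?thesis using h unfolding cc_def by simp
qed

locale constr2 = constr +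
  assumes qlim: "(\<lambda>m. (real (af m) - real (bf m)) / real (cf m + 1)) \<longlonglongrightarrow> upper_density Aset"
begin

abbreviation "\<alpha> \<equiv> upper_density Aset"
definition "q m = (real (af m) - real (bf m)) / real (Suc (cf m))"

lemma q_close: "\<epsilon> > 0 \<Longrightarrow> \<exists>K1. \<forall>m\<ge>K1. \<bar>q m - \<alpha>\<bar> < \<epsilon>"
  using qlim unfolding LIMSEQ_iff q_def by (simp add: real_norm_def)

lemma exist_okv: "\<exists>m. okv m k p = 0"
proof (cases "k = 0")
  case True
  have "okv 1 k p = 0" unfolding okv_iff using True by (intro conjI exI[of _ 1]) auto
  then show ?thesis by blast
next
  case False
  define \<epsilon> where "\<epsilon> = 1 / (2 * real k)"
  have e: "\<epsilon> > 0" using False by (simp add: \<epsilon>_def)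
  obtain i where i: "i \<ge> k * p" "rho (Suc i) Aset > \<alpha> - \<epsilon>"
    using ud_frequently[OF e, of Aset] unfolding frequently_sequentially by blast
  define n where "n = Suc i"
  obtain K1 where K1: "\<forall>m\<ge>K1. \<bar>q m - \<alpha>\<bar> < \<epsilon>" using q_close[OF e] by blast
  obtain s where s: "\<forall>m\<ge>s. cnt n m = card (Aset \<inter> {..<n})" using cnt_eventually by blast
  define m where "m = max (max k n) (max K1 s)"
  have m: "k \<le> m" "n \<le> m" "m \<ge> K1" "m \<ge> s" unfolding m_def by auto
  have qm: "q m < \<alpha> + \<epsilon>" using K1 m(3) by fastforce
  have c: "real (cnt n m) / real n = rho n Aset" using s m(4) unfolding rho_def by simp
  have "q m - 1 / real k < real (cnt n m) / real n"
  proof -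
    have "1 / real k = 2 * \<epsilon>" using False by (simp add: \<epsilon>_def)
    moreover have "rho n Aset > \<alpha> - \<epsilon>" using i(2) by (simp add: n_def)
    ultimately show ?thesis using c qm by linarith
  qed
  then have "k * n * af m < k * cnt n m * Suc (cf m) + n * Suc (cf m) + k * n * bf m"
    using ineq_real_iff[of k n "af m" "cnt n m" "cf m" "bf m"] False unfolding q_def n_def by simp
  moreover have "k * p < n" using i(1) unfolding n_def by simp
  ultimately have "okv m k p = 0" unfolding okv_iff using m by blast
  then show ?thesis by blast
qed

lemma M_okv: "okv (M k p) k p = 0"
  unfolding M_def using exist_okv by (rule LeastI_ex)

lemma N_Suc: "N (Suc j) = nsel (Suc j) (N j) (Mseq (Suc j))"
  unfolding N_def Mseq_def by simp

lemma step_facts: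
  fixes j :: nat
  defines "m \<equiv> Mseq (Suc j)"
  shows "Suc j \<le> m" "Suc j * N j < N (Suc j)"
    "Suc j * N (Suc j) * af m < Suc j * cnt (N (Suc j)) m * Suc (cf m) + N (Suc j) * Suc (cf m) + Suc j * N (Suc j) * bf m"
proof -
  have o: "okv m (Suc j) (N j) = 0" unfolding m_def Mseq_def using M_okv by simp
  then have lt: "nsel (Suc j) (N j) m < Suc m" and km: "Suc j \<le> m" unfolding okv_def by (auto split: if_splits)
  show "Suc j \<le> m" by (rule km)
  have "Q (Suc j) (N j) m (nsel (Suc j) (N j) m) = 0"
    using lt unfolding nsel_def by (rule bminv_zero)
  moreover have "N (Suc j) = nsel (Suc j) (N j) m" unfolding N_Suc m_def ..
  ultimately have qq: "Q (Suc j) (N j) m (N (Suc j)) = 0" by simp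
  then show "Suc j * N j < N (Suc j)" unfolding Q_def by (simp split: if_splits)
  show "Suc j * N (Suc j) * af m < Suc j * cnt (N (Suc j)) m * Suc (cf m) + N (Suc j) * Suc (cf m) + Suc j * N (Suc j) * bf m"
    using qq unfolding Q_def by (simp split: if_splits)
qed

lemma N_less: "N j < N (Suc j)"
proof -
  have "N j \<le> Suc j * N j" by simp
  then show ?thesis using step_facts(2)[of j] by linarith
qed

lemma N_mono: "strict_mono N"
  unfolding strict_mono_Suc_iff using N_less by blast

lemma N_ge: "j \<le> N j"
  using N_mono by (rule strict_mono_imp_increasing)

lemma N_unbounded: "\<forall>x. \<exists>k. x < N k"
  using N_ge by (metis le_imp_less_Suc order_le_less_trans N_less)

lemma K_val: "N j \<le> x \<Longrightarrow> x < N (Suc j) \<Longrightarrow> K x = Suc j"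
  unfolding K_def
proof (rule Least_equality)
  assume "N j \<le> x" "x < N (Suc j)"
  show "x < N (Suc j)" by fact
  fix y assume "x < N y"
  show "Suc j \<le> y"
  proof (rule ccontr)
    assume "\<not> Suc j \<le> y"
    then have "y \<le> j" by simp
    then have "N y \<le> N j" using N_mono by (simp add: strict_mono_less_eq)
    then show False using \<open>x < N y\<close> \<open>N j \<le> x\<close> by simp
  qed
qed

definition "Bset = {x. chi x = 1}"

lemma B_sub: "Bset \<subseteq> Aset"
  unfolding Bset_def chi_def using T_sound by (auto split: if_splits)

lemma cnt_B: "cnt (N (Suc j)) (Mseq (Suc j)) \<le> N j + card (Bset \<inter> {..<N (Suc j)})"
proof -
  let ?n = "N (Suc j)" and ?m = "Mseq (Suc j)"
  have "{x. x < ?n \<and> T ?m x \<noteq> 0} \<subseteq> {..<N j} \<union> (Bset \<inter> {..<?n})"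
  proof
    fix x assume x: "x \<in> {x. x < ?n \<and> T ?m x \<noteq> 0}"
    show "x \<in> {..<N j} \<union> (Bset \<inter> {..<?n})"
    proof (cases "x < N j")
      case False
      then have "K x = Suc j" using x K_val[of j x] by simp
      then have "chi x = 1" using x unfolding chi_def by simp
      then show ?thesis using x unfolding Bset_def by simp
    qed simp
  qed
  then have "cnt ?n ?m \<le> card ({..<N j} \<union> (Bset \<inter> {..<?n}))"
    unfolding cnt_card by (intro card_mono) auto
  also have "\<dots> \<le> card {..<N j} + card (Bset \<inter> {..<?n})" by (rule card_Un_le)
  finally show ?thesis by simp
qed

lemma rho_B: "rho (N (Suc j)) Bset > q (Mseq (Suc j)) - 2 / real (Suc j)"
proof -
  let ?n = "N (Suc j)" and ?m = "Mseq (Suc j)" and ?k = "Suc j"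
  have npos: "?n > 0" using N_less[of j] by simp
  have c1: "q ?m - 1 / real ?k < real (cnt ?n ?m) / real ?n"
    using ineq_real_iff[of ?k ?n "af ?m" "cnt ?n ?m" "cf ?m" "bf ?m"] npos step_facts(3)[of j]
    unfolding q_def by simp
  have c2: "real (N j) / real ?n < 1 / real ?k"
  proof -
    have "real ?k * real (N j) < real ?n" using step_facts(2)[of j] by (metis of_nat_less_iff of_nat_mult)
    then show ?thesis using npos by (simp add: field_simps)
  qed
  have c3: "real (cnt ?n ?m) \<le> real (N j) + real (card (Bset \<inter> {..<?n}))"
    using cnt_B[of j] by (metis of_nat_add of_nat_le_iff)
  have "real (cnt ?n ?m) / real ?n \<le> real (N j) / real ?n + rho ?n Bset"
    using c3 npos unfolding rho_def by (simp add: divide_right_mono add_divide_distrib[symmetric])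
  then show ?thesis using c1 c2 by simp
qed

end



context constr2
begin

lemma key: "\<epsilon> > 0 \<Longrightarrow> \<exists>j\<ge>J. rho (N (Suc j)) Bset > \<alpha> - \<epsilon> \<and> rho (N (Suc j)) Aset < \<alpha> + \<epsilon>"
proof -
  assume e: "\<epsilon> > 0"
  then have e2: "\<epsilon> / 2 > 0" by simp
  obtain K1 where K1: "\<forall>m\<ge>K1. \<bar>q m - \<alpha>\<bar> < \<epsilon> / 2" using q_close[OF e2] by blast
  obtain K2 where K2: "\<forall>i\<ge>K2. rho (Suc i) Aset < \<alpha> + \<epsilon>"
    using ud_eventually[OF e, of Aset] unfolding eventually_sequentially by blast
  define j where "j = max (max J K1) (max K2 (nat \<lceil>4 / \<epsilon>\<rceil>))"
  have j: "j \<ge> J" "j \<ge> K1" "j \<ge> K2" "j \<ge> nat \<lceil>4 / \<epsilon>\<rceil>" unfolding j_def by (meson max.cobounded1 max.cobounded2 order_trans)+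
  let ?m = "Mseq (Suc j)" and ?n = "N (Suc j)"
  have "?m \<ge> K1" using step_facts(1)[of j] j(2) by simp
  then have "\<bar>q ?m - \<alpha>\<bar> < \<epsilon> / 2" using K1 by blast
  then have qm: "q ?m > \<alpha> - \<epsilon> / 2" by linarith
  have "real (nat \<lceil>4 / \<epsilon>\<rceil>) \<le> real j" using j(4) by (rule of_nat_mono)
  then have "real j \<ge> 4 / \<epsilon>" by (rule order_trans[OF real_nat_ceiling_ge])
  then have "real (Suc j) * \<epsilon> > 4" using e by (simp add: field_simps)
  then have t: "2 / real (Suc j) < \<epsilon> / 2" by (simp add: field_simps)
  have rB: "rho ?n Bset > \<alpha> - \<epsilon>" using rho_B[of j] qm t by linarith
  have "Suc j \<le> ?n" by (rule N_ge)
  then have nn: "?n = Suc (?n - 1)" "?n - 1 \<ge> K2" using j(3) by auto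
  have "rho (Suc (?n - 1)) Aset < \<alpha> + \<epsilon>" using K2 nn(2) by blast
  then have rA: "rho ?n Aset < \<alpha> + \<epsilon>" using nn(1) by simp
  show ?thesis using rB rA j(1) by blast
qed

lemma ud_B: "upper_density Bset = \<alpha>"
proof (rule antisym)
  show "upper_density Bset \<le> \<alpha>" by (rule ud_mono[OF B_sub])
  show "\<alpha> \<le> upper_density Bset"
  proof (rule ud_ge, intro allI impI)
    fix \<epsilon> :: real assume e: "\<epsilon> > 0"
    show "frequently (\<lambda>n. rho (Suc n) Bset > \<alpha> - \<epsilon>) sequentially"
      unfolding frequently_sequentially
    proof
      fix J
      obtain j where j: "j \<ge> J" "rho (N (Suc j)) Bset > \<alpha> - \<epsilon>" using key[OF e] by blast
      have "Suc j \<le> N (Suc j)" by (rule N_ge)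
      then have nn: "N (Suc j) = Suc (N (Suc j) - 1)" "N (Suc j) - 1 \<ge> J" using j(1) by auto
      have "rho (Suc (N (Suc j) - 1)) Bset > \<alpha> - \<epsilon>" using j(2) nn(1) by simp
      then show "\<exists>n\<ge>J. rho (Suc n) Bset > \<alpha> - \<epsilon>" using nn(2) by blast
    qed
  qed
qed

lemma rho_diff: "rho n (Aset - Bset) = rho n Aset - rho n Bset"
proof -
  have "Bset \<inter> {..<n} \<subseteq> Aset \<inter> {..<n}" using B_sub by auto
  moreover have "(Aset - Bset) \<inter> {..<n} = (Aset \<inter> {..<n}) - (Bset \<inter> {..<n})" by auto
  ultimately have "card ((Aset - Bset) \<inter> {..<n}) = card (Aset \<inter> {..<n}) - card (Bset \<inter> {..<n})"
    by (simp add: card_Diff_subset)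
  moreover have "card (Bset \<inter> {..<n}) \<le> card (Aset \<inter> {..<n})"
    using \<open>Bset \<inter> {..<n} \<subseteq> Aset \<inter> {..<n}\<close> by (intro card_mono) auto
  ultimately show ?thesis unfolding rho_def by (simp add: of_nat_diff diff_divide_distrib)
qed

lemma dist_B: "dens_dist Aset Bset = 0"
proof -
  have e: "(Aset - Bset) \<union> (Bset - Aset) = Aset - Bset" using B_sub by auto
  show ?thesis unfolding dens_dist_def e
  proof (rule ld_zero, intro allI impI)
    fix \<epsilon> :: real assume e: "\<epsilon> > 0"
    then have e2: "\<epsilon> / 2 > 0" by simp
    show "frequently (\<lambda>n. rho (Suc n) (Aset - Bset) < \<epsilon>) sequentially"
      unfolding frequently_sequentially
    proof
      fix J
      obtain j where j: "j \<ge> J" "rho (N (Suc j)) Bset > \<alpha> - \<epsilon> / 2" "rho (N (Suc j)) Aset < \<alpha> + \<epsilon> / 2"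
        using key[OF e2] by blast
      have "Suc j \<le> N (Suc j)" by (rule N_ge)
      then have nn: "N (Suc j) = Suc (N (Suc j) - 1)" "N (Suc j) - 1 \<ge> J" using j(1) by auto
      have "rho (N (Suc j)) (Aset - Bset) < \<epsilon>" unfolding rho_diff using j(2,3) by linarith
      then have "rho (Suc (N (Suc j) - 1)) (Aset - Bset) < \<epsilon>" using nn(1) by simp
      then show "\<exists>n\<ge>J. rho (Suc n) (Aset - Bset) < \<epsilon>" using nn(2) by blast
    qed
  qed
qed

lemma B_computable: "computable_set Bset"
  unfolding Bset_def using chi_computable exist_okv N_unbounded by blast

end

theorem mainTheorem9:
  fixes A :: "nat set"
  assumes "ce_set A"
    and "delta02_real (upper_density A)"
  shows "\<exists>B. B \<subseteq> A \<and> computable_set B \<and> upper_density B = upper_density A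
             \<and> dens_dist A B = 0"
proof -
  obtain r where r: "A = {n. \<exists>y. eval r [n] y}" using assms(1) unfolding ce_set_def by blast
  obtain a b c where abc: "computable_fun a" "computable_fun b" "computable_fun c"
    "(\<lambda>n. (real (a n) - real (b n)) / real (c n + 1)) \<longlonglongrightarrow> upper_density A"
    using assms(2) unfolding delta02_real_def by blast
  obtain ra where ra: "\<forall>n. eval ra [n] (a n)" using abc(1) unfolding computable_fun_def by blast
  obtain rb where rb: "\<forall>n. eval rb [n] (b n)" using abc(2) unfolding computable_fun_def by blast
  obtain rc where rc: "\<forall>n. eval rc [n] (c n)" using abc(3) unfolding computable_fun_def by blast
  interpret constr r ra rb rc a b c using ra rb rc by unfold_locales
  have AA: "Aset = A" unfolding Aset_def r ..
  interpret constr2 r ra rb rc a b c using abc(4) unfolding AA[symmetric] by unfold_locales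
  show ?thesis
    by (rule exI[of _ Bset]) (use B_sub B_computable ud_B dist_B AA in auto)
qed

end
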